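(* Under the rank assumptions stated in the context, let $S_{j}:=\{y+s v_j: y\in \mathrm{relint}(F_{j}), s> 0\}$. Then $S_{j}$ and $S_{k}$ are disjoint for any $j\neq k$.
   Context: Let $d\geq 3$, let $v_1,\dots,v_d\in\mathbb{R}^d$ be distinct unit vectors and $b_1,\dots,b_d$ real numbers, and let $A=\{x\in \mathbb{R}^d:\ x\cdot v_j\leq b_j\ \text{for}\ j=1,\dots, d\}$ be a (possibly unbounded) convex polytope. For each $j$, $F_j$ denotes the (possible) facet of $A$ corresponding to $v_j$ (the part of $A$ on the hyperplane $\{x: x\cdot v_j=b_j\}$), and $\mathrm{relint}$ denotes relative interior. The following rank assumptions are imposed: for any $1\leq j<k\leq d$, if $\operatorname{rank} \begin{bmatrix} v_j & v_k \end{bmatrix}<2$, then $\operatorname{rank} \begin{bmatrix} v_j & v_k\end{bmatrix}<\operatorname{rank} \begin{bmatrix} v_j & v_k\\ b_j&b_k \end{bmatrix}$; for any $1\leq j<k<l\leq d$, if $\operatorname{rank} \begin{bmatrix} v_j & v_k & v_l\end{bmatrix}<3$, then $\operatorname{rank} \begin{bmatrix} v_j & v_k & v_l\end{bmatrix}<\operatorname{rank} \begin{bmatrix} v_j & v_k & v_l\\ b_j&b_k&b_l \end{bmatrix}$; for any $1\leq j<k<l<s\leq d$, if $\operatorname{rank} \begin{bmatrix} v_j & v_k & v_l& v_s\end{bmatrix}<4$, then $\operatorname{rank} \begin{bmatrix} v_j & v_k & v_l& v_s\end{bmatrix}<\operatorname{rank} \begin{bmatrix} v_j & v_k & v_l&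 v_s\\ b_j&b_k&b_l&b_s \end{bmatrix}$. *)

theory Defs
  imports "HOL-Analysis.Analysis"
begin

text \<open>Vectors in R^d are modelled as real^'n with d = CARD('n); the d constraints are
indexed by j in {1..d}.\<close>

definition polyA :: "(nat \<Rightarrow> real^'n) \<Rightarrow> (nat \<Rightarrow> real) \<Rightarrow> (real^'n) set" where
  "polyA v b = {x. \<forall>j\<in>{1..CARD('n)}. x \<bullet> v j \<le> b j}"

definition facetF :: "(nat \<Rightarrow> real^'n) \<Rightarrow> (nat \<Rightarrow> real) \<Rightarrow> nat \<Rightarrow> (real^'n) set" where
  "facetF v b j = polyA v b \<inter> {x. x \<bullet> v j = b j}"

definition setS :: "(nat \<Rightarrow> real^'n) \<Rightarrow> (nat \<Rightarrow> real) \<Rightarrow> nat \<Rightarrow> (real^'n) set" where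
  "setS v b j = {y + s *\<^sub>R v j | y s. y \<in> rel_interior (facetF v b j) \<and> s > 0}"

text \<open>Rank of a matrix = dimension of the span of its columns.
The augmented column of index j is (v j, b j).\<close>

definition colrank :: "(nat \<Rightarrow> real^'n) \<Rightarrow> nat set \<Rightarrow> nat" where
  "colrank v J = dim (v ` J)"

definition augrank :: "(nat \<Rightarrow> real^'n) \<Rightarrow> (nat \<Rightarrow> real) \<Rightarrow> nat set \<Rightarrow> nat" where
  "augrank v b J = dim ((\<lambda>j. (v j, b j)) ` J)"

end

theory Submission
  imports Defs
begin

theorem lemma6p2:
  fixes v :: "nat \<Rightarrow> real^'n" and b :: "nat \<Rightarrow> real" and j k :: nat
  assumes d3: "CARD('n) \<ge> 3"
    and unit: "\<forall>i\<in>{1..CARD('n)}. norm (v i) = 1"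
    and distinct: "inj_on v {1..CARD('n)}"
    and rank2: "\<forall>j1 k1. 1 \<le> j1 \<and> j1 < k1 \<and> k1 \<le> CARD('n) \<longrightarrow>
        colrank v {j1, k1} < 2 \<longrightarrow> colrank v {j1, k1} < augrank v b {j1, k1}"
    and rank3: "\<forall>j1 k1 l1. 1 \<le> j1 \<and> j1 < k1 \<and> k1 < l1 \<and> l1 \<le> CARD('n) \<longrightarrow>
        colrank v {j1, k1, l1} < 3 \<longrightarrow> colrank v {j1, k1, l1} < augrank v b {j1, k1, l1}"
    and rank4: "\<forall>j1 k1 l1 s1. 1 \<le> j1 \<and> j1 < k1 \<and> k1 < l1 \<and> l1 < s1 \<and> s1 \<le> CARD('n) \<longrightarrow>
        colrank v {j1, k1, l1, s1} < 4 \<longrightarrow>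
        colrank v {j1, k1, l1, s1} < augrank v b {j1, k1, l1, s1}"
    and j: "j \<in> {1..CARD('n)}" and k: "k \<in> {1..CARD('n)}" and jk: "j \<noteq> k"
  shows "setS v b j \<inter> setS v b k = {}"
proof (rule ccontr)
  assume "setS v b j \<inter> setS v b k \<noteq> {}"
  then obtain y s y' t where y: "y \<in> rel_interior (facetF v b j)" and s: "s > 0"
    and y': "y' \<in> rel_interior (facetF v b k)" and t: "t > 0"
    and eq: "y + s *\<^sub>R v j = y' + t *\<^sub>R v k"
    unfolding setS_def by blast
  have yF: "y \<in> facetF v b j" and y'F: "y' \<in> facetF v b k"
    using y y' rel_interior_subset by blast+
  have a1: "y \<bullet> v k \<le> b k" "y \<bullet> v j = b j"
    using yF k unfolding facetF_def polyA_def by auto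
  have a2: "y' \<bullet> v j \<le> b j" "y' \<bullet> v k = b k"
    using y'F j unfolding facetF_def polyA_def by auto
  have d: "y - y' = t *\<^sub>R v k - s *\<^sub>R v j" using eq by (simp add: algebra_simps)
  have "(y - y') \<bullet> (y - y') = (y - y') \<bullet> (t *\<^sub>R v k - s *\<^sub>R v j)"
    using d by metis
  also have "\<dots> = t * (y \<bullet> v k - y' \<bullet> v k) - s * (y \<bullet> v j - y' \<bullet> v j)"
    by (simp add: inner_diff_right inner_diff_left right_diff_distrib)
  also have "\<dots> \<le> 0"
  proof -
    have "t * (y \<bullet> v k - y' \<bullet> v k) \<le> 0" using a1 a2 t by (simp add: mult_nonneg_nonpos)
    moreover have "s * (y \<bullet> v j - y' \<bullet> v j) \<ge> 0" using a1 a2 s by simp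
    ultimately show ?thesis by linarith
  qed
  finally have "y - y' = 0" using inner_eq_zero_iff[of "y - y'"] inner_ge_zero[of "y - y'"] by linarith
  hence "y = y'" by simp
  with eq have e2: "s *\<^sub>R v j = t *\<^sub>R v k" by simp
  have "norm (s *\<^sub>R v j) = s" using unit j s by simp
  moreover have "norm (t *\<^sub>R v k) = t" using unit k t by simp
  ultimately have "s = t" using e2 by simp
  with e2 s have "v j = v k" by simp
  with distinct j k jk show False by (meson inj_onD)
qed

end
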